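(* For a subset $C\subseteq L$, the following are equivalent: (i) $C$ is $\mathbf{u}$-compatible; (ii) there exists a (not necessarily straight) road map $(\{H^\alpha_p\},\{V^\beta_q\})$ such that for every $k=1,\dots,r$, $$C|_k\subseteq\Big(\bigcup_{p=1}^{u_{\mathrm{t}(h_k)}}H^{\mathrm{t}(h_k)}_p|_k\Big)\cap\Big(\bigcup_{q=1}^{u_{\mathrm{s}(h_k)}}V^{\mathrm{s}(h_k)}_q|_k\Big).$$
   Context: Let $\mathcal{Q}$ be a bipartite quiver with vertex set $V_{\mathcal{Q}}=V_{\rm source}\sqcup V_{\rm target}$ and arrows $h_1,\dots,h_r$, each $h_k$ from $\mathrm{s}(h_k)\in V_{\rm source}$ to $\mathrm{t}(h_k)\in V_{\rm target}$. Let $\mathbf{m}=(m_\gamma)$, $\mathbf{u}=(u_\gamma)$ be tuples of nonnegative integers indexed by $V_{\mathcal{Q}}$. For $k=1,\dots,r$ let $X^{(k)}$ be an $m_{\mathrm{t}(h_k)}\times m_{\mathrm{s}(h_k)}$ matrix of variables $x^{(k)}_{ij}$; page $k$ is the grid $[1,m_{\mathrm{t}(h_k)}]\times[1,m_{\mathrm{s}(h_k)}]$. For $\alpha\in V_{\rm target}$ with $r_1<\dots<r_s$ the indices of arrows with target $\alpha$, $A_\alpha=[X^{(r_1)}|\cdots|X^{(r_s)}]$; for $\beta\in V_{\rm source}$ with $r'_1<\dots<r'_t$ the indices of arrows with source $\beta$, $A_\beta$ is the stack of $X^{(r'_1)},\dots,X^{(r'_t)}$ top to bottom. $a_\gamma\times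 b_\gamma$ is the size of $A_\gamma$; $v_\alpha=\sum_{k:\mathrm{t}(h_k)=\alpha}u_{\mathrm{s}(h_k)}$, $v_\beta=\sum_{k:\mathrm{s}(h_k)=\beta}u_{\mathrm{t}(h_k)}$. Standing assumption: $0<u_\gamma\le\min(a_\gamma,b_\gamma)$, $u_\alpha\le v_\alpha$, $u_\beta\le v_\beta$. $L=\{(i,j,k)\in\mathbb{Z}^3:1\le k\le r,\ (i,j)\text{ in page }k\}$; for $C\subseteq L$, $C|_k=\{(i,j):(i,j,k)\in C\}$. $\phi_\gamma$ sends a position $(p,q)$ of $A_\gamma$ to $(i,j,k)$ if that entry is $x^{(k)}_{ij}$; $C^\gamma=\phi_\gamma^{-1}(C)$. Coordinates $(i,j)$: $i$ row (downward, north = decreasing $i$), $j$ column (eastward). A diagonal chain of size $s$ is $\{(i_1,j_1),\dots,(i_s,j_s)\}$ with $i_1<\dots<i_s$, $j_1<\dots<j_s$. $C$ is $\mathbf{u}$-compatible if no $C^\gamma$ contains a diagonal chain of size $u_\gamma+1$. A path is a lattice path with unit steps going east $(0,1)$ or north $(-1,0)$ from its SW endpoint to its NE endpoint; nonintersecting = no shared vertex. A road map consists of, for each $\alpha\in V_{\rm target}$, nonintersecting paths $H^\alpha_1,\dots,H^\alpha_{u_\alpha}$ in the grid of $A_\alpha$, $H^\alpha_p$ with endpoints $(a_\alpha-u_\alpha+p,1)$, $(p,b_\alpha)$, and for each $\beta\in V_{\rm source}$ nonintersecting paths $V^\beta_1,\dots,V^\beta_{u_\beta}$ in the grid of $A_\beta$,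 $V^\beta_q$ with endpoints $(1,b_\beta-u_\beta+q)$, $(a_\beta,q)$. For a path $H$ in $A_\gamma$, $H|_k$ denotes the set of its lattice points lying in the block of page $k$, written in page-$k$ coordinates. *)

theory Defs
  imports Main
begin

(* Bipartite quiver data: arrows h_1..h_r, h_k : s k -> t k, s k in V_source, t k in V_target.
   Page k is the grid [1, m (t k)] x [1, m (s k)]. Coordinates are (row, column). *)

definition L_set :: "nat \<Rightarrow> (nat \<Rightarrow> 'v) \<Rightarrow> (nat \<Rightarrow> 'v) \<Rightarrow> ('v \<Rightarrow> nat) \<Rightarrow> (nat \<times> nat \<times> nat) set" where
  "L_set r s t m = {(i, j, k). 1 \<le> k \<and> k \<le> r \<and> 1 \<le> i \<and> i \<le> m (t k) \<and> 1 \<le> j \<and> j \<le> m (s k)}"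

definition in_page :: "(nat \<Rightarrow> 'v) \<Rightarrow> (nat \<Rightarrow> 'v) \<Rightarrow> ('v \<Rightarrow> nat) \<Rightarrow> nat \<Rightarrow> nat \<times> nat \<Rightarrow> bool" where
  "in_page s t m k p \<longleftrightarrow> 1 \<le> fst p \<and> fst p \<le> m (t k) \<and> 1 \<le> snd p \<and> snd p \<le> m (s k)"

definition restr :: "(nat \<times> nat \<times> nat) set \<Rightarrow> nat \<Rightarrow> (nat \<times> nat) set" where
  "restr C k = {(i, j). (i, j, k) \<in> C}"

(* --- target vertex alpha: A_alpha = [X^(r_1) | ... | X^(r_s)] --- *)
definition a_tgt :: "('v \<Rightarrow> nat) \<Rightarrow> 'v \<Rightarrow> nat" where
  "a_tgt m \<alpha> = m \<alpha>"

definition b_tgt :: "nat \<Rightarrow> (nat \<Rightarrow> 'v) \<Rightarrow> (nat \<Rightarrow> 'v) \<Rightarrow> ('v \<Rightarrow> nat) \<Rightarrow> 'v \<Rightarrow> nat" where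
  "b_tgt r s t m \<alpha> = (\<Sum>k\<in>{k\<in>{1..r}. t k = \<alpha>}. m (s k))"

(* column offset of the block of page k inside A_(t k) *)
definition coff :: "(nat \<Rightarrow> 'v) \<Rightarrow> (nat \<Rightarrow> 'v) \<Rightarrow> ('v \<Rightarrow> nat) \<Rightarrow> nat \<Rightarrow> nat" where
  "coff s t m k = (\<Sum>j\<in>{j\<in>{1..<k}. t j = t k}. m (s j))"

definition v_tgt :: "nat \<Rightarrow> (nat \<Rightarrow> 'v) \<Rightarrow> (nat \<Rightarrow> 'v) \<Rightarrow> ('v \<Rightarrow> nat) \<Rightarrow> 'v \<Rightarrow> nat" where
  "v_tgt r s t u \<alpha> = (\<Sum>k\<in>{k\<in>{1..r}. t k = \<alpha>}. u (s k))"

(* C^alpha = phi_alpha^{-1}(C): phi_alpha maps (p, coff k + j) to (p, j, k) *)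
definition C_tgt :: "nat \<Rightarrow> (nat \<Rightarrow> 'v) \<Rightarrow> (nat \<Rightarrow> 'v) \<Rightarrow> ('v \<Rightarrow> nat) \<Rightarrow> (nat \<times> nat \<times> nat) set \<Rightarrow> 'v \<Rightarrow> (nat \<times> nat) set" where
  "C_tgt r s t m C \<alpha> = {(p, q). \<exists>i j k. (i, j, k) \<in> C \<and> (i, j, k) \<in> L_set r s t m \<and> t k = \<alpha>
                                  \<and> p = i \<and> q = coff s t m k + j}"

(* --- source vertex beta: A_beta = X^(r'_1) stacked over ... over X^(r'_t) --- *)
definition a_src :: "nat \<Rightarrow> (nat \<Rightarrow> 'v) \<Rightarrow> (nat \<Rightarrow> 'v) \<Rightarrow> ('v \<Rightarrow> nat) \<Rightarrow> 'v \<Rightarrow> nat" where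
  "a_src r s t m \<beta> = (\<Sum>k\<in>{k\<in>{1..r}. s k = \<beta>}. m (t k))"

definition b_src :: "('v \<Rightarrow> nat) \<Rightarrow> 'v \<Rightarrow> nat" where
  "b_src m \<beta> = m \<beta>"

(* row offset of the block of page k inside A_(s k) *)
definition roff :: "(nat \<Rightarrow> 'v) \<Rightarrow> (nat \<Rightarrow> 'v) \<Rightarrow> ('v \<Rightarrow> nat) \<Rightarrow> nat \<Rightarrow> nat" where
  "roff s t m k = (\<Sum>j\<in>{j\<in>{1..<k}. s j = s k}. m (t j))"

definition v_src :: "nat \<Rightarrow> (nat \<Rightarrow> 'v) \<Rightarrow> (nat \<Rightarrow> 'v) \<Rightarrow> ('v \<Rightarrow> nat) \<Rightarrow> 'v \<Rightarrow> nat" where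
  "v_src r s t u \<beta> = (\<Sum>k\<in>{k\<in>{1..r}. s k = \<beta>}. u (t k))"

definition C_src :: "nat \<Rightarrow> (nat \<Rightarrow> 'v) \<Rightarrow> (nat \<Rightarrow> 'v) \<Rightarrow> ('v \<Rightarrow> nat) \<Rightarrow> (nat \<times> nat \<times> nat) set \<Rightarrow> 'v \<Rightarrow> (nat \<times> nat) set" where
  "C_src r s t m C \<beta> = {(p, q). \<exists>i j k. (i, j, k) \<in> C \<and> (i, j, k) \<in> L_set r s t m \<and> s k = \<beta>
                                  \<and> p = roff s t m k + i \<and> q = j}"

definition diag_chain :: "(nat \<times> nat) set \<Rightarrow> bool" where
  "diag_chain D \<longleftrightarrow> (\<forall>x\<in>D. \<forall>y\<in>D. x \<noteq> y \<longrightarrow>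
       (fst x < fst y \<and> snd x < snd y) \<or> (fst y < fst x \<and> snd y < snd x))"

definition has_diag_chain :: "nat \<Rightarrow> (nat \<times> nat) set \<Rightarrow> bool" where
  "has_diag_chain n S \<longleftrightarrow> (\<exists>D. D \<subseteq> S \<and> finite D \<and> card D = n \<and> diag_chain D)"

definition u_compatible ::
  "'v set \<Rightarrow> 'v set \<Rightarrow> nat \<Rightarrow> (nat \<Rightarrow> 'v) \<Rightarrow> (nat \<Rightarrow> 'v) \<Rightarrow> ('v \<Rightarrow> nat) \<Rightarrow> ('v \<Rightarrow> nat)
     \<Rightarrow> (nat \<times> nat \<times> nat) set \<Rightarrow> bool" where
  "u_compatible Vs Vt r s t m u C \<longleftrightarrow>
     (\<forall>\<alpha>\<in>Vt. \<not> has_diag_chain (u \<alpha> + 1) (C_tgt r s t m C \<alpha>)) \<and>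
     (\<forall>\<beta>\<in>Vs. \<not> has_diag_chain (u \<beta> + 1) (C_src r s t m C \<beta>))"

(* lattice paths, listed from SW endpoint to NE endpoint; unit steps east (0,1) or north (-1,0) *)
definition lattice_path :: "(nat \<times> nat) list \<Rightarrow> bool" where
  "lattice_path xs \<longleftrightarrow> xs \<noteq> [] \<and>
     (\<forall>n. Suc n < length xs \<longrightarrow>
        (fst (xs ! Suc n) = fst (xs ! n) \<and> snd (xs ! Suc n) = Suc (snd (xs ! n))) \<or>
        (Suc (fst (xs ! Suc n)) = fst (xs ! n) \<and> snd (xs ! Suc n) = snd (xs ! n)))"

definition in_grid :: "nat \<Rightarrow> nat \<Rightarrow> (nat \<times> nat) list \<Rightarrow> bool" where
  "in_grid a b xs \<longleftrightarrow> (\<forall>(i, j)\<in>set xs. 1 \<le> i \<and> i \<le> a \<and> 1 \<le> j \<and> j \<le> b)"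

(* H|_k for a path H in A_(t k), resp. V|_k for a path V in A_(s k), in page-k coordinates *)
definition restr_tgt_path :: "(nat \<Rightarrow> 'v) \<Rightarrow> (nat \<Rightarrow> 'v) \<Rightarrow> ('v \<Rightarrow> nat) \<Rightarrow> (nat \<times> nat) list \<Rightarrow> nat \<Rightarrow> (nat \<times> nat) set" where
  "restr_tgt_path s t m H k = {(i, j). in_page s t m k (i, j) \<and> (i, coff s t m k + j) \<in> set H}"

definition restr_src_path :: "(nat \<Rightarrow> 'v) \<Rightarrow> (nat \<Rightarrow> 'v) \<Rightarrow> ('v \<Rightarrow> nat) \<Rightarrow> (nat \<times> nat) list \<Rightarrow> nat \<Rightarrow> (nat \<times> nat) set" where
  "restr_src_path s t m V k = {(i, j). in_page s t m k (i, j) \<and> (roff s t m k + i, j) \<in> set V}"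

definition road_map ::
  "'v set \<Rightarrow> 'v set \<Rightarrow> nat \<Rightarrow> (nat \<Rightarrow> 'v) \<Rightarrow> (nat \<Rightarrow> 'v) \<Rightarrow> ('v \<Rightarrow> nat) \<Rightarrow> ('v \<Rightarrow> nat)
     \<Rightarrow> ('v \<Rightarrow> nat \<Rightarrow> (nat \<times> nat) list) \<Rightarrow> ('v \<Rightarrow> nat \<Rightarrow> (nat \<times> nat) list) \<Rightarrow> bool" where
  "road_map Vs Vt r s t m u H V \<longleftrightarrow>
     (\<forall>\<alpha>\<in>Vt.
        (\<forall>p\<in>{1..u \<alpha>}. lattice_path (H \<alpha> p) \<and> in_grid (a_tgt m \<alpha>) (b_tgt r s t m \<alpha>) (H \<alpha> p)
            \<and> hd (H \<alpha> p) = (a_tgt m \<alpha> - u \<alpha> + p, 1) \<and> last (H \<alpha> p) = (p, b_tgt r s t m \<alpha>)) \<and>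
        (\<forall>p\<in>{1..u \<alpha>}. \<forall>p'\<in>{1..u \<alpha>}. p \<noteq> p' \<longrightarrow> set (H \<alpha> p) \<inter> set (H \<alpha> p') = {})) \<and>
     (\<forall>\<beta>\<in>Vs.
        (\<forall>q\<in>{1..u \<beta>}. lattice_path (V \<beta> q) \<and> in_grid (a_src r s t m \<beta>) (b_src m \<beta>) (V \<beta> q)
            \<and> hd (V \<beta> q) = (a_src r s t m \<beta>, q) \<and> last (V \<beta> q) = (1, b_src m \<beta> - u \<beta> + q)) \<and>
        (\<forall>q\<in>{1..u \<beta>}. \<forall>q'\<in>{1..u \<beta>}. q \<noteq> q' \<longrightarrow> set (V \<beta> q) \<inter> set (V \<beta> q') = {}))"

end

theory Submission
  imports Defs
begin


definition dch :: "(nat \<times> nat) list \<Rightarrow> bool" where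
  "dch xs \<longleftrightarrow> sorted_wrt (\<lambda>x y. fst x < fst y \<and> snd x < snd y) xs"

lemma dch_snoc: "dch (xs @ [z]) \<longleftrightarrow> dch xs \<and> (\<forall>x\<in>set xs. fst x < fst z \<and> snd x < snd z)"
  by (auto simp: dch_def sorted_wrt_append)

lemma dch_take: "dch xs \<Longrightarrow> dch (take n xs)"
  unfolding dch_def by (rule sorted_wrt_take)

lemma dch_distinct: "dch xs \<Longrightarrow> distinct (map fst xs)"
proof -
  assume "dch xs"
  then have "sorted_wrt (<) (map fst xs)"
    unfolding dch_def sorted_wrt_map by (rule sorted_wrt_mono_rel[rotated]) auto
  then show ?thesis by (simp add: strict_sorted_iff)
qed

lemma dch_distinct2: "dch xs \<Longrightarrow> distinct (map snd xs)"
proof -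
  assume "dch xs"
  then have "sorted_wrt (<) (map snd xs)"
    unfolding dch_def sorted_wrt_map by (rule sorted_wrt_mono_rel[rotated]) auto
  then show ?thesis by (simp add: strict_sorted_iff)
qed

lemma dch_len_fst: assumes "dch xs" "\<forall>x\<in>set xs. 1 \<le> fst x \<and> fst x \<le> i"
  shows "length xs \<le> i"
proof -
  have "length xs = card (set (map fst xs))"
    using dch_distinct[OF assms(1)] by (metis distinct_card length_map set_map)
  also have "\<dots> \<le> card {1..i}" by (rule card_mono) (use assms(2) in auto)
  finally show ?thesis by simp
qed

lemma dch_len_snd: assumes "dch xs" "\<forall>x\<in>set xs. 1 \<le> snd x \<and> snd x \<le> j"
  shows "length xs \<le> j"
proof -
  have "length xs = card (set (map snd xs))"
    using dch_distinct2[OF assms(1)] by (metis distinct_card length_map set_map)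
  also have "\<dots> \<le> card {1..j}" by (rule card_mono) (use assms(2) in auto)
  finally show ?thesis by simp
qed

lemma sorted_wrt_pair: "sorted_wrt R xs \<Longrightarrow> x \<in> set xs \<Longrightarrow> y \<in> set xs \<Longrightarrow> x \<noteq> y \<Longrightarrow> R x y \<or> R y x"
  by (induction xs) auto

lemma dch_diag: "dch xs \<Longrightarrow> diag_chain (set xs)"
  unfolding diag_chain_def dch_def
proof (intro ballI impI)
  fix x y assume "sorted_wrt (\<lambda>x y. fst x < fst y \<and> snd x < snd y) xs" "x \<in> set xs" "y \<in> set xs" "x \<noteq> y"
  from sorted_wrt_pair[OF this] show "fst x < fst y \<and> snd x < snd y \<or> fst y < fst x \<and> snd y < snd x" .
qed

lemma nochain_list:
  assumes "\<not> has_diag_chain (Suc n) T" "dch xs" "set xs \<subseteq> T"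
  shows "length xs \<le> n"
proof (rule ccontr)
  assume ln: "\<not> length xs \<le> n"
  define ys where "ys = take (Suc n) xs"
  have d: "dch ys" unfolding ys_def by (rule dch_take[OF assms(2)])
  have "distinct (map fst ys)" by (rule dch_distinct[OF d])
  then have dy: "distinct ys" by (simp add: distinct_map)
  have ly: "length ys = Suc n" using ln unfolding ys_def by simp
  have c: "card (set ys) = Suc n" using distinct_card[OF dy] ly by simp
  have sT: "set ys \<subseteq> T" using assms(3) set_take_subset[of "Suc n" xs] unfolding ys_def by (rule order_trans[rotated])
  have "has_diag_chain (Suc n) T"
    unfolding has_diag_chain_def
    by (rule exI[of _ "set ys"]) (intro conjI sT finite_set c dch_diag[OF d])
  then show False using assms(1) by simp
qed

lemma lp_mono: assumes "lattice_path xs" "n \<le> n'" "n' < length xs"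
  shows "fst (xs!n') \<le> fst (xs!n) \<and> snd (xs!n) \<le> snd (xs!n')"
  using assms(2,3)
proof (induction n' rule: dec_induct)
  case base then show ?case by simp
next
  case (step k)
  then have "(fst (xs ! Suc k) = fst (xs ! k) \<and> snd (xs ! Suc k) = Suc (snd (xs ! k))) \<or>
        (Suc (fst (xs ! Suc k)) = fst (xs ! k) \<and> snd (xs ! Suc k) = snd (xs ! k))"
    using assms(1) unfolding lattice_path_def by blast
  then show ?case using step by auto
qed

lemma lp_nodiag: assumes "lattice_path xs" "x \<in> set xs" "y \<in> set xs"
  shows "\<not> (fst x < fst y \<and> snd x < snd y)"
proof -
  obtain n n' where "n < length xs" "n' < length xs" "x = xs!n" "y = xs!n'"
    using assms by (metis in_set_conv_nth)
  then show ?thesis using lp_mono[OF assms(1), of n n'] lp_mono[OF assms(1), of n' n]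
    by (cases "n \<le> n'") auto
qed

lemma pigeon:
  assumes "finite D" "D \<subseteq> (\<Union>p\<in>{1..n}. set (P p))" "diag_chain D"
    "\<forall>p\<in>{1..n}. lattice_path (P p)"
  shows "card D \<le> n"
proof -
  have "D = (\<Union>p\<in>{1..n}. D \<inter> set (P p))" using assms(2) by blast
  then have "card D \<le> (\<Sum>p\<in>{1..n}. card (D \<inter> set (P p)))"
    by (metis card_UN_le finite_atLeastAtMost)
  also have "\<dots> \<le> (\<Sum>p\<in>{1..n}. 1)"
  proof (rule sum_mono)
    fix p assume p: "p \<in> {1..n}"
    have "\<forall>x\<in>D \<inter> set (P p). \<forall>y\<in>D \<inter> set (P p). x = y"
    proof (intro ballI, rule ccontr)
      fix x y assume xy: "x \<in> D \<inter> set (P p)" "y \<in> D \<inter> set (P p)" "x \<noteq> y"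
      then have "(fst x < fst y \<and> snd x < snd y) \<or> (fst y < fst x \<and> snd y < snd x)"
        using assms(3) unfolding diag_chain_def by blast
      then show False using lp_nodiag[of "P p" x y] lp_nodiag[of "P p" y x] assms(4) p xy by blast
    qed
    then show "card (D \<inter> set (P p)) \<le> 1"
      using card_le_Suc0_iff_eq[of "D \<inter> set (P p)"] assms(1) by simp
  qed
  finally show ?thesis by simp
qed

lemma lp_swap: assumes "lattice_path xs" shows "lattice_path (rev (map prod.swap xs))"
  unfolding lattice_path_def
proof (intro conjI allI impI)
  show "rev (map prod.swap xs) \<noteq> []" using assms by (simp add: lattice_path_def)
next
  fix n assume n: "Suc n < length (rev (map prod.swap xs))"
  define k where "k = length xs - Suc (Suc n)"
  have k1: "Suc k < length xs" and k2: "length xs - Suc n = Suc k" using n by (auto simp: k_def)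
  have "(fst (xs ! Suc k) = fst (xs ! k) \<and> snd (xs ! Suc k) = Suc (snd (xs ! k))) \<or>
        (Suc (fst (xs ! Suc k)) = fst (xs ! k) \<and> snd (xs ! Suc k) = snd (xs ! k))"
    using assms k1 unfolding lattice_path_def by blast
  moreover have "rev (map prod.swap xs) ! n = prod.swap (xs ! Suc k)"
    using n k2 by (simp add: rev_nth)
  moreover have "rev (map prod.swap xs) ! Suc n = prod.swap (xs ! k)"
    using n k_def by (simp add: rev_nth)
  ultimately show "fst (rev (map prod.swap xs) ! Suc n) = fst (rev (map prod.swap xs) ! n) \<and>
          snd (rev (map prod.swap xs) ! Suc n) = Suc (snd (rev (map prod.swap xs) ! n)) \<or>
          Suc (fst (rev (map prod.swap xs) ! Suc n)) = fst (rev (map prod.swap xs) ! n) \<and>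
          snd (rev (map prod.swap xs) ! Suc n) = snd (rev (map prod.swap xs) ! n)"
    by auto
qed



locale rimc =
  fixes a b u :: nat and S :: "(nat \<times> nat) set"
  assumes u0: "0 < u" and ua: "u \<le> a" and ub: "u \<le> b"
    and Sgrid: "S \<subseteq> {1..a} \<times> {1..b}"
    and nochain: "\<And>xs. dch xs \<Longrightarrow> set xs \<subseteq> S \<Longrightarrow> length xs \<le> u"
begin

definition inbox :: "nat \<Rightarrow> nat \<Rightarrow> (nat \<times> nat) list \<Rightarrow> bool" where
  "inbox i j xs \<longleftrightarrow> set xs \<subseteq> S \<and> (\<forall>x\<in>set xs. fst x \<le> i \<and> snd x \<le> j)"

definition g :: "nat \<Rightarrow> nat \<Rightarrow> nat" where
  "g i j = Max {length xs | xs. dch xs \<and> inbox i j xs}"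

lemma g_fin: "finite {length xs | xs. dch xs \<and> inbox i j xs}"
  by (rule finite_subset[of _ "{..u}"]) (auto simp: inbox_def dest: nochain)

lemma g_ge: "dch xs \<Longrightarrow> inbox i j xs \<Longrightarrow> length xs \<le> g i j"
  unfolding g_def by (rule Max_ge[OF g_fin]) blast

lemma g_ex: "\<exists>xs. dch xs \<and> inbox i j xs \<and> length xs = g i j"
proof -
  have "[] \<in> {xs. dch xs \<and> inbox i j xs}" by (simp add: dch_def inbox_def)
  then have "g i j \<in> {length xs | xs. dch xs \<and> inbox i j xs}"
    unfolding g_def by (intro Max_in[OF g_fin]) blast
  then show ?thesis by force
qed

lemma g_le_u: "g i j \<le> u"
proof -
  obtain xs where xs: "dch xs" "inbox i j xs" "length xs = g i j" using g_ex by blast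
  show ?thesis using nochain[OF xs(1)] xs(2,3) by (auto simp: inbox_def)
qed

lemma g_le_i: "g i j \<le> i"
proof -
  obtain xs where xs: "dch xs" "inbox i j xs" "length xs = g i j" using g_ex by blast
  have "\<forall>x\<in>set xs. 1 \<le> fst x \<and> fst x \<le> i" using xs(2) Sgrid by (auto simp: inbox_def)
  from dch_len_fst[OF xs(1) this] xs(3) show ?thesis by simp
qed

lemma g_le_j: "g i j \<le> j"
proof -
  obtain xs where xs: "dch xs" "inbox i j xs" "length xs = g i j" using g_ex by blast
  have "\<forall>x\<in>set xs. 1 \<le> snd x \<and> snd x \<le> j" using xs(2) Sgrid by (auto simp: inbox_def)
  from dch_len_snd[OF xs(1) this] xs(3) show ?thesis by simp
qed

lemma g_mono: "i \<le> i' \<Longrightarrow> j \<le> j' \<Longrightarrow> g i j \<le> g i' j'"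
proof -
  assume "i \<le> i'" "j \<le> j'"
  obtain xs where xs: "dch xs" "inbox i j xs" "length xs = g i j" using g_ex by blast
  have "inbox i' j' xs" using xs(2) \<open>i \<le> i'\<close> \<open>j \<le> j'\<close> by (auto simp: inbox_def)
  from g_ge[OF xs(1) this] xs(3) show ?thesis by simp
qed

lemma g_step: "g i j \<le> Suc (g (i - 1) (j - 1))"
proof -
  obtain xs where xs: "dch xs" "inbox i j xs" "length xs = g i j" using g_ex by blast
  show ?thesis
  proof (cases xs rule: rev_cases)
    case Nil then show ?thesis using xs by simp
  next
    case (snoc ys z)
    have d: "dch ys" "\<forall>x\<in>set ys. fst x < fst z \<and> snd x < snd z" using xs(1) snoc dch_snoc by auto
    have z: "fst z \<le> i" "snd z \<le> j" using xs(2) snoc by (auto simp: inbox_def)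
    have "inbox (i - 1) (j - 1) ys" using xs(2) snoc d(2) z unfolding inbox_def by fastforce
    from g_ge[OF d(1) this] show ?thesis using xs(3) snoc by simp
  qed
qed

lemma g_S: assumes "x \<in> S" shows "Suc (g (fst x - 1) (snd x - 1)) \<le> g (fst x) (snd x)"
proof -
  obtain ys where ys: "dch ys" "inbox (fst x - 1) (snd x - 1) ys" "length ys = g (fst x - 1) (snd x - 1)"
    using g_ex by blast
  have x1: "1 \<le> fst x" "1 \<le> snd x" using assms Sgrid by auto
  have "\<forall>y\<in>set ys. fst y < fst x \<and> snd y < snd x"
  proof
    fix y assume "y \<in> set ys"
    then have "y \<in> S" "fst y \<le> fst x - 1" "snd y \<le> snd x - 1" using ys(2) by (auto simp: inbox_def)
    then show "fst y < fst x \<and> snd y < snd x" using x1 by linarith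
  qed
  then have "dch (ys @ [x])" using ys(1) dch_snoc by simp
  moreover have "inbox (fst x) (snd x) (ys @ [x])" using ys(2) assms unfolding inbox_def by auto
  ultimately have "length (ys @ [x]) \<le> g (fst x) (snd x)" by (rule g_ge)
  then show ?thesis using ys(3) by simp
qed

definition L :: "nat \<Rightarrow> nat \<Rightarrow> nat" where
  "L i j = max (i - (a - u)) (min i (j - (b - u)))"

lemma compS: "1 \<le> (i::nat) \<Longrightarrow> (i - c = 0 \<and> i - 1 - c = 0) \<or> i - c = Suc (i - 1 - c)" by arith
lemma compS0: "1 \<le> (i::nat) \<Longrightarrow> (i = 0 \<and> i - 1 = 0) \<or> i = Suc (i - 1)" by arith
lemma compS2: "(i::nat) - c \<le> Suc (i - 1 - c)" by arith
lemma maxc: "((x::nat) = 0 \<and> x' = 0) \<or> x = Suc x' \<Longrightarrow> (y = 0 \<and> y' = 0) \<or> y = Suc y' \<Longrightarrow> (max x y = 0 \<and> max x' y' = 0) \<or> max x y = Suc (max x' y')"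
  by (auto simp: max_def)
lemma minc: "((x::nat) = 0 \<and> x' = 0) \<or> x = Suc x' \<Longrightarrow> (y = 0 \<and> y' = 0) \<or> y = Suc y' \<Longrightarrow> (min x y = 0 \<and> min x' y' = 0) \<or> min x y = Suc (min x' y')"
  by (auto simp: min_def)
lemma maxs: "(x::nat) \<le> Suc x' \<Longrightarrow> y \<le> Suc y' \<Longrightarrow> max x y \<le> Suc (max x' y')" by (auto simp: max_def)
lemma mins: "(x::nat) \<le> Suc x' \<Longrightarrow> y \<le> Suc y' \<Longrightarrow> min x y \<le> Suc (min x' y')" by (auto simp: min_def)

lemma L_mono: "i \<le> i' \<Longrightarrow> j \<le> j' \<Longrightarrow> L i j \<le> L i' j'"
  unfolding L_def by (intro max.mono min.mono diff_le_mono)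

lemma L_step: "L i j \<le> Suc (L (i - 1) (j - 1))"
proof -
  have "i \<le> Suc (i - 1)" by arith
  then show ?thesis unfolding L_def by (intro maxs mins compS2)
qed

lemma L_pos: "1 \<le> i \<Longrightarrow> 1 \<le> j \<Longrightarrow> 0 < L i j \<Longrightarrow> L i j = Suc (L (i - 1) (j - 1))"
proof -
  assume i: "1 \<le> i" and j: "1 \<le> j" and p: "0 < L i j"
  have "(L i j = 0 \<and> L (i - 1) (j - 1) = 0) \<or> L i j = Suc (L (i - 1) (j - 1))"
    unfolding L_def by (intro maxc minc compS compS0 i j)
  then show ?thesis using p by auto
qed

lemma L_le_i: "L i j \<le> i" unfolding L_def by simp

lemma L_le_u: assumes "i \<le> a" "j \<le> b" shows "L i j \<le> u"
proof -
  have "i - (a - u) \<le> u" using assms ua by arith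
  moreover have "j - (b - u) \<le> u" using assms ub by arith
  ultimately show ?thesis unfolding L_def by simp
qed

lemma L_i0: "L i 0 = i - (a - u)" unfolding L_def by simp

lemma L_ib: assumes "i \<le> a" shows "L i b = min i u"
proof -
  have "b - (b - u) = u" using ub by simp
  moreover have "i - (a - u) \<le> min i u" using assms ua by arith
  ultimately show ?thesis unfolding L_def by simp
qed

lemma L_ge2: "min i (j - (b - u)) \<le> L i j" unfolding L_def by simp
lemma L_ge1: "i - (a - u) \<le> L i j" unfolding L_def by simp

definition G :: "nat \<Rightarrow> nat \<Rightarrow> nat" where
  "G i j = max (g i j) (L i j)"

lemma G_mono: "i \<le> i' \<Longrightarrow> j \<le> j' \<Longrightarrow> G i j \<le> G i' j'"
  unfolding G_def using g_mono L_mono by (meson max.mono)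

lemma G_step: "G i j \<le> Suc (G (i - 1) (j - 1))"
  unfolding G_def by (intro maxs g_step L_step)

lemma G_le_i: "G i j \<le> i" unfolding G_def using g_le_i L_le_i by simp

lemma G_le_u: "i \<le> a \<Longrightarrow> j \<le> b \<Longrightarrow> G i j \<le> u" unfolding G_def using g_le_u L_le_u by simp

lemma G_0j: "G 0 j = 0" using G_le_i[of 0 j] by simp

lemma G_i0: "G i 0 = i - (a - u)" unfolding G_def using g_le_j[of i 0] L_i0 by simp

lemma G_ib: "i \<le> a \<Longrightarrow> G i b = min i u"
  unfolding G_def using g_le_i[of i b] g_le_u[of i b] L_ib by simp

lemma G_S: assumes "x \<in> S" shows "G (fst x) (snd x) = Suc (G (fst x - 1) (snd x - 1))"
proof -
  have x1: "1 \<le> fst x" "1 \<le> snd x" using assms Sgrid by auto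
  have A: "Suc (g (fst x - 1) (snd x - 1)) \<le> G (fst x) (snd x)" using g_S[OF assms] unfolding G_def by simp
  have B: "Suc (L (fst x - 1) (snd x - 1)) \<le> G (fst x) (snd x)"
  proof (cases "0 < L (fst x) (snd x)")
    case True then show ?thesis using L_pos[OF x1 True] unfolding G_def by simp
  next
    case False
    then have "L (fst x - 1) (snd x - 1) = 0" using L_mono[of "fst x - 1" "fst x" "snd x - 1" "snd x"] by simp
    then show ?thesis using A by simp
  qed
  have "Suc (G (fst x - 1) (snd x - 1)) = max (Suc (g (fst x - 1) (snd x - 1))) (Suc (L (fst x - 1) (snd x - 1)))"
    unfolding G_def by simp
  then have "Suc (G (fst x - 1) (snd x - 1)) \<le> G (fst x) (snd x)" using A B by (simp only: max.bounded_iff)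
  then show ?thesis using G_step[of "fst x" "snd x"] by simp
qed

end


context rimc begin

definition rim :: "nat \<Rightarrow> (nat \<times> nat) set" where
  "rim p = {(i, j). 1 \<le> i \<and> i \<le> a \<and> 1 \<le> j \<and> j \<le> b \<and> G i j = p \<and> Suc (G (i - 1) (j - 1)) = p}"

lemma rim_iff: "(i, j) \<in> rim p \<longleftrightarrow> 1 \<le> i \<and> i \<le> a \<and> 1 \<le> j \<and> j \<le> b \<and> G i j = p \<and> Suc (G (i - 1) (j - 1)) = p"
  by (simp add: rim_def)

definition key :: "nat \<times> nat \<Rightarrow> nat" where
  "key y = snd y + a - fst y"

lemma rim_unique: assumes "y \<in> rim p" "y' \<in> rim p" "key y = key y'" shows "y = y'"
proof -
  have aux: "False" if "y \<in> rim p" "y' \<in> rim p" "fst y < fst y'" "snd y < snd y'" for y y'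
  proof -
    have "G (fst y) (snd y) \<le> G (fst y' - 1) (snd y' - 1)" by (rule G_mono) (use that in auto)
    then show False using that(1,2) by (cases y, cases y') (auto simp: rim_def)
  qed
  obtain i j i' j' where y: "y = (i, j)" and y': "y' = (i', j')" by (cases y, cases y')
  have r: "i \<le> a" "i' \<le> a" using assms(1,2) y y' by (auto simp: rim_def)
  have k: "j + a - i = j' + a - i'" using assms(3) y y' by (simp add: key_def)
  show ?thesis
  proof (cases "i < i'")
    case True
    then have "j < j'" using k r by arith
    then show ?thesis using aux[OF assms(1,2)] True y y' by simp
  next
    case False
    show ?thesis
    proof (cases "i' < i")
      case True
      then have "j' < j" using k r by arith
      then show ?thesis using aux[OF assms(2,1)] True y y' by simp
    next
      case False
      then have "i = i'" using \<open>\<not> i < i'\<close> by simp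
      then have "j = j'" using k r by arith
      then show ?thesis using \<open>i = i'\<close> y y' by simp
    qed
  qed
qed

lemma rim_next: assumes "(i, j) \<in> rim p" "(i, j) \<noteq> (p, b)"
  shows "(i - 1, j) \<in> rim p \<or> (i, j + 1) \<in> rim p"
proof -
  have h: "1 \<le> i" "i \<le> a" "1 \<le> j" "j \<le> b" "G i j = p" "Suc (G (i - 1) (j - 1)) = p"
    using assms(1) by (auto simp: rim_def)
  define B where "B = G (i - 1) j"
  have B1: "G (i - 1) (j - 1) \<le> B" unfolding B_def by (rule G_mono) auto
  have B2: "B \<le> p" unfolding B_def h(5)[symmetric] by (rule G_mono) auto
  show ?thesis
  proof (cases "B = p")
    case True
    have "i \<noteq> 1"
    proof
      assume "i = 1"
      then have "B = 0" unfolding B_def using G_0j by simp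
      then show False using True h(6) by simp
    qed
    then have i2: "2 \<le> i" using h(1) by simp
    have c1: "G (i - 1 - 1) (j - 1) \<le> G (i - 1) (j - 1)" by (rule G_mono) auto
    have c2: "B \<le> Suc (G (i - 1 - 1) (j - 1))" unfolding B_def using G_step[of "i - 1" j] .
    have "Suc (G (i - 1 - 1) (j - 1)) = p" using c1 c2 True h(6) by simp
    moreover have "1 \<le> i - 1" "i - 1 \<le> a" using i2 h by arith+
    ultimately have "(i - 1, j) \<in> rim p" using h True unfolding rim_iff B_def by simp
    then show ?thesis by simp
  next
    case False
    then have SB: "Suc B = p" using B1 B2 h(6) by simp
    show ?thesis
    proof (cases "j = b")
      case True
      have "G i b = min i u" "G (i - 1) b = min (i - 1) u" using G_ib h(2) by auto
      then have "Suc (min (i - 1) u) = min i u" using SB h(5) True unfolding B_def by simp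
      then have "i \<le> u" "i = p" using h(1) h(5) True \<open>G i b = min i u\<close> by (auto simp: min_def split: if_splits)
      then show ?thesis using assms(2) True by simp
    next
      case False
      then have jb: "j + 1 \<le> b" using h(4) by simp
      have "G i j \<le> G i (j + 1)" by (rule G_mono) auto
      moreover have "G i (j + 1) \<le> Suc B" unfolding B_def using G_step[of i "j + 1"] by simp
      ultimately have "G i (j + 1) = p" using h(5) SB by simp
      then have "(i, j + 1) \<in> rim p" using h jb SB unfolding rim_iff B_def by simp
      then show ?thesis by simp
    qed
  qed
qed

lemma start_rim: assumes "1 \<le> p" "p \<le> u" shows "(a - u + p, 1) \<in> rim p"
proof -
  have e1: "a - u + p - (a - u) = p" by simp
  have e2: "min (a - u + p) (1 - (b - u)) \<le> p" using assms(1) by (simp add: min_le_iff_disj)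
  have L1: "L (a - u + p) 1 = p" unfolding L_def using e1 e2 by simp
  have g1: "g (a - u + p) 1 \<le> p" using g_le_j[of "a - u + p" 1] assms(1) by simp
  have G1: "G (a - u + p) 1 = p" unfolding G_def using L1 g1 by simp
  have G0: "G (a - u + p - 1) 0 = p - 1" using G_i0 assms(1) by simp
  have "1 \<le> a - u + p" "a - u + p \<le> a" "1 \<le> b" using assms ua ub by arith+
  then show ?thesis unfolding rim_iff using G1 G0 assms ua by simp
qed

lemma end_rim: assumes "1 \<le> p" "p \<le> u" shows "(p, b) \<in> rim p"
proof -
  have G1: "G p b = p" using G_ib[of p] assms ua by simp
  have "b - 1 - (b - u) = u - 1" using ub by simp
  then have "min (p - 1) (b - 1 - (b - u)) = p - 1" using assms by simp
  then have "p - 1 \<le> L (p - 1) (b - 1)" using L_ge2[of "p - 1" "b - 1"] by simp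
  then have "p - 1 \<le> G (p - 1) (b - 1)" unfolding G_def by simp
  moreover have "G (p - 1) (b - 1) \<le> p - 1" by (rule G_le_i)
  ultimately have "Suc (G (p - 1) (b - 1)) = p" using assms by simp
  then show ?thesis unfolding rim_iff using G1 assms ua ub by simp
qed

lemma rim_key: assumes "y \<in> rim p"
  shows "1 \<le> p \<and> p \<le> u \<and> u - p + 1 \<le> key y \<and> key y \<le> a + b - p"
proof -
  obtain i j where y: "y = (i, j)" by (cases y)
  have h: "1 \<le> i" "i \<le> a" "1 \<le> j" "j \<le> b" "G i j = p" "Suc (G (i - 1) (j - 1)) = p"
    using assms y by (auto simp: rim_def)
  have pu: "p \<le> u" using G_le_u[OF h(2,4)] h(5) by simp
  have l1: "i - (a - u) \<le> p" using L_ge1[of i j] h(5) unfolding G_def by simp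
  have l2: "p \<le> i" using G_le_i[of i j] h(5) by simp
  have "u - p + 1 \<le> j + a - i" using l1 h(1-4) pu ua by arith
  moreover have "j + a - i \<le> a + b - p" using l2 h(1-4) by arith
  ultimately show ?thesis using pu h(6) y by (simp add: key_def)
qed

lemma rim_exists: assumes "1 \<le> p" "p \<le> u" shows "n \<le> a + b - u - 1 \<Longrightarrow> \<exists>y\<in>rim p. key y = u - p + 1 + n"
proof (induction n)
  case 0
  have "key (a - u + p, 1) = u - p + 1" using assms ua by (simp add: key_def)
  then show ?case using start_rim[OF assms] by force
next
  case (Suc n)
  then obtain y where y: "y \<in> rim p" "key y = u - p + 1 + n" by auto
  obtain i j where ij: "y = (i, j)" by (cases y)
  have "key (p, b) = a + b - p" using assms ua by (simp add: key_def)
  moreover have "u - p + 1 + n < a + b - p" using Suc.prems assms ua ub by arith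
  ultimately have "y \<noteq> (p, b)" using y(2) by auto
  then have "(i - 1, j) \<in> rim p \<or> (i, j + 1) \<in> rim p" using rim_next y(1) ij by simp
  moreover have "i \<le> a" "1 \<le> i" using y(1) ij by (auto simp: rim_def)
  ultimately show ?case
  proof (elim disjE)
    assume r: "(i - 1, j) \<in> rim p"
    then have "2 \<le> i" by (auto simp: rim_def)
    then have "key (i - 1, j) = Suc (key y)" using ij \<open>i \<le> a\<close> by (simp add: key_def)
    then show ?thesis using r y(2) by force
  next
    assume r: "(i, j + 1) \<in> rim p"
    have "key (i, j + 1) = Suc (key y)" using ij \<open>i \<le> a\<close> by (simp add: key_def)
    then show ?thesis using r y(2) by force
  qed
qed

definition pt :: "nat \<Rightarrow> nat \<Rightarrow> nat \<times> nat" where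
  "pt p k = (THE y. y \<in> rim p \<and> key y = k)"

lemma pt_eq: assumes "y \<in> rim p" shows "pt p (key y) = y"
  unfolding pt_def
proof (rule the_equality)
  show "y \<in> rim p \<and> key y = key y" using assms by simp
  fix z assume "z \<in> rim p \<and> key z = key y"
  then show "z = y" using rim_unique assms by blast
qed

lemma pt_in: assumes "1 \<le> p" "p \<le> u" "n \<le> a + b - u - 1"
  shows "pt p (u - p + 1 + n) \<in> rim p \<and> key (pt p (u - p + 1 + n)) = u - p + 1 + n"
proof -
  obtain y where "y \<in> rim p" "key y = u - p + 1 + n" using rim_exists[OF assms] by auto
  then show ?thesis using pt_eq by metis
qed

definition path :: "nat \<Rightarrow> (nat \<times> nat) list" where
  "path p = map (\<lambda>n. pt p (u - p + 1 + n)) [0..<a + b - u]"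

lemma N_pos: "0 < a + b - u" using u0 ua ub by simp

lemma path_set: assumes "1 \<le> p" "p \<le> u" shows "set (path p) = rim p"
proof
  show "set (path p) \<subseteq> rim p"
    using pt_in[OF assms] unfolding path_def by fastforce
next
  show "rim p \<subseteq> set (path p)"
  proof
    fix y assume y: "y \<in> rim p"
    define n where "n = key y - (u - p + 1)"
    have kr: "u - p + 1 \<le> key y" "key y \<le> a + b - p" using rim_key[OF y] by auto
    then have "u - p + 1 + n = key y" "n < a + b - u" unfolding n_def using assms ua by arith+
    then have "pt p (key y) \<in> set (path p)" unfolding path_def by force
    then show "y \<in> set (path p)" using pt_eq[OF y] by simp
  qed
qed

lemma path_lp: assumes "1 \<le> p" "p \<le> u" shows "lattice_path (path p)"
  unfolding lattice_path_def
proof (intro conjI allI impI)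
  show "path p \<noteq> []" using N_pos by (simp add: path_def)
next
  fix n assume n: "Suc n < length (path p)"
  then have n1: "Suc n < a + b - u" by (simp add: path_def)
  define k where "k = u - p + 1 + n"
  have y: "pt p k \<in> rim p" "key (pt p k) = k" using pt_in[OF assms, of n] n1 unfolding k_def by auto
  obtain i j where ij: "pt p k = (i, j)" by (cases "pt p k")
  have "key (p, b) = a + b - p" using assms ua by (simp add: key_def)
  moreover have "k < a + b - p" using n1 assms ua ub unfolding k_def by arith
  ultimately have "(i, j) \<noteq> (p, b)" using y(2) ij by auto
  then have disj: "(i - 1, j) \<in> rim p \<or> (i, j + 1) \<in> rim p" using rim_next y(1) ij by simp
  have ia: "i \<le> a" "1 \<le> i" using y(1) ij by (auto simp: rim_def)
  have p0: "path p ! n = (i, j)" using n1 ij unfolding path_def k_def by simp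
  have p1: "path p ! Suc n = pt p (Suc k)" using n1 unfolding path_def k_def by simp
  from disj show "fst (path p ! Suc n) = fst (path p ! n) \<and> snd (path p ! Suc n) = Suc (snd (path p ! n)) \<or>
         Suc (fst (path p ! Suc n)) = fst (path p ! n) \<and> snd (path p ! Suc n) = snd (path p ! n)"
  proof (elim disjE)
    assume r: "(i - 1, j) \<in> rim p"
    then have "2 \<le> i" by (auto simp: rim_def)
    then have "key (i - 1, j) = Suc k" using y(2) ij ia by (simp add: key_def)
    then have "pt p (Suc k) = (i - 1, j)" using pt_eq[OF r] by simp
    then show ?thesis using p0 p1 \<open>2 \<le> i\<close> by simp
  next
    assume r: "(i, j + 1) \<in> rim p"
    have "key (i, j + 1) = Suc k" using y(2) ij ia by (simp add: key_def)
    then have "pt p (Suc k) = (i, j + 1)" using pt_eq[OF r] by simp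
    then show ?thesis using p0 p1 by simp
  qed
qed

lemma path_hd: assumes "1 \<le> p" "p \<le> u" shows "hd (path p) = (a - u + p, 1)"
proof -
  have "hd (path p) = pt p (u - p + 1)" using N_pos unfolding path_def by (simp add: hd_map)
  moreover have "key (a - u + p, 1) = u - p + 1" using assms ua by (simp add: key_def)
  ultimately show ?thesis using pt_eq[OF start_rim[OF assms]] by simp
qed

lemma path_last: assumes "1 \<le> p" "p \<le> u" shows "last (path p) = (p, b)"
proof -
  define N where "N = a + b - u"
  have N0: "0 < N" using N_pos unfolding N_def .
  have "last (path p) = pt p (u - p + 1 + (N - 1))" using N0 unfolding path_def N_def[symmetric]
    by (simp add: last_conv_nth)
  moreover have "u - p + 1 + (N - 1) = a + b - p" using assms ua ub unfolding N_def by arith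
  moreover have "key (p, b) = a + b - p" using assms ua by (simp add: key_def)
  ultimately show ?thesis using pt_eq[OF end_rim[OF assms]] by simp
qed

lemma path_grid: assumes "1 \<le> p" "p \<le> u" shows "in_grid a b (path p)"
  unfolding in_grid_def path_set[OF assms] by (auto simp: rim_def)

lemma S_cover: assumes "x \<in> S" shows "\<exists>p\<in>{1..u}. x \<in> rim p"
proof -
  have x: "1 \<le> fst x" "fst x \<le> a" "1 \<le> snd x" "snd x \<le> b" using assms Sgrid by auto
  define p where "p = G (fst x) (snd x)"
  have "Suc (G (fst x - 1) (snd x - 1)) = p" using G_S[OF assms] unfolding p_def by simp
  moreover have "p \<le> u" unfolding p_def using G_le_u x by simp
  ultimately have "p \<in> {1..u}" "x \<in> rim p" using x unfolding p_def
    by (auto simp: rim_def split: prod.splits)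
  then show ?thesis by blast
qed

lemma single_main:
  "\<exists>P. (\<forall>p\<in>{1..u}. lattice_path (P p) \<and> in_grid a b (P p) \<and> hd (P p) = (a - u + p, 1) \<and> last (P p) = (p, b))
     \<and> (\<forall>p\<in>{1..u}. \<forall>p'\<in>{1..u}. p \<noteq> p' \<longrightarrow> set (P p) \<inter> set (P p') = {})
     \<and> S \<subseteq> (\<Union>p\<in>{1..u}. set (P p))"
proof (intro exI conjI ballI impI)
  fix p assume "p \<in> {1..u}"
  then have p: "1 \<le> p" "p \<le> u" by auto
  show "lattice_path (path p)" by (rule path_lp[OF p])
  show "in_grid a b (path p)" by (rule path_grid[OF p])
  show "hd (path p) = (a - u + p, 1)" by (rule path_hd[OF p])
  show "last (path p) = (p, b)" by (rule path_last[OF p])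
next
  fix p p' assume "p \<in> {1..u}" "p' \<in> {1..u}" "p \<noteq> p'"
  then show "set (path p) \<inter> set (path p') = {}" using path_set by (auto simp: rim_def)
next
  show "S \<subseteq> (\<Union>p\<in>{1..u}. set (path p))"
    using S_cover path_set by fastforce
qed

end


lemma coff_bound: assumes "k \<in> {1..r}" shows "coff s t m k + m (s k) \<le> b_tgt r s t m (t k)"
proof -
  define A where "A = {j \<in> {1..<k}. t j = t k}"
  have fA: "finite A" "k \<notin> A" unfolding A_def by auto
  have "coff s t m k + m (s k) = (\<Sum>j\<in>insert k A. m (s j))"
    unfolding coff_def A_def[symmetric] using fA by (simp add: sum.insert)
  also have "\<dots> \<le> (\<Sum>j\<in>{j\<in>{1..r}. t j = t k}. m (s j))"
    by (rule sum_mono2) (use assms in \<open>auto simp: A_def\<close>)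
  finally show ?thesis unfolding b_tgt_def .
qed

lemma roff_bound: assumes "k \<in> {1..r}" shows "roff s t m k + m (t k) \<le> a_src r s t m (s k)"
proof -
  define A where "A = {j \<in> {1..<k}. s j = s k}"
  have fA: "finite A" "k \<notin> A" unfolding A_def by auto
  have "roff s t m k + m (t k) = (\<Sum>j\<in>insert k A. m (t j))"
    unfolding roff_def A_def[symmetric] using fA by (simp add: sum.insert)
  also have "\<dots> \<le> (\<Sum>j\<in>{j\<in>{1..r}. s j = s k}. m (t j))"
    by (rule sum_mono2) (use assms in \<open>auto simp: A_def\<close>)
  finally show ?thesis unfolding a_src_def .
qed

lemma dch_swap: "dch xs \<Longrightarrow> dch (map prod.swap xs)"
  unfolding dch_def sorted_wrt_map by (simp add: conj_commute)

theorem lemma2p8: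
  fixes Vs Vt :: "'v set" and r :: nat and s t :: "nat \<Rightarrow> 'v" and m u :: "'v \<Rightarrow> nat"
    and C :: "(nat \<times> nat \<times> nat) set"
  assumes fin: "finite Vs" "finite Vt"
    and disj: "Vs \<inter> Vt = {}"
    and arrows: "\<forall>k\<in>{1..r}. s k \<in> Vs \<and> t k \<in> Vt"
    and u_tgt: "\<forall>\<alpha>\<in>Vt. 0 < u \<alpha> \<and> u \<alpha> \<le> min (a_tgt m \<alpha>) (b_tgt r s t m \<alpha>) \<and> u \<alpha> \<le> v_tgt r s t u \<alpha>"
    and u_src: "\<forall>\<beta>\<in>Vs. 0 < u \<beta> \<and> u \<beta> \<le> min (a_src r s t m \<beta>) (b_src m \<beta>) \<and> u \<beta> \<le> v_src r s t u \<beta>"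
    and CL: "C \<subseteq> L_set r s t m"
  shows "u_compatible Vs Vt r s t m u C \<longleftrightarrow>
    (\<exists>H V. road_map Vs Vt r s t m u H V \<and>
       (\<forall>k\<in>{1..r}. restr C k \<subseteq>
          (\<Union>p\<in>{1..u (t k)}. restr_tgt_path s t m (H (t k) p) k) \<inter>
          (\<Union>q\<in>{1..u (s k)}. restr_src_path s t m (V (s k) q) k)))"
proof
  assume uc: "u_compatible Vs Vt r s t m u C"
  define QT where "QT \<alpha> P \<longleftrightarrow>
     (\<forall>p\<in>{1..u \<alpha>}. lattice_path (P p) \<and> in_grid (a_tgt m \<alpha>) (b_tgt r s t m \<alpha>) (P p)
        \<and> hd (P p) = (a_tgt m \<alpha> - u \<alpha> + p, 1) \<and> last (P p) = (p, b_tgt r s t m \<alpha>))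
     \<and> (\<forall>p\<in>{1..u \<alpha>}. \<forall>p'\<in>{1..u \<alpha>}. p \<noteq> p' \<longrightarrow> set (P p) \<inter> set (P p') = {})
     \<and> C_tgt r s t m C \<alpha> \<subseteq> (\<Union>p\<in>{1..u \<alpha>}. set (P p))" for \<alpha> and P :: "nat \<Rightarrow> (nat \<times> nat) list"
  define QS where "QS \<beta> P \<longleftrightarrow>
     (\<forall>q\<in>{1..u \<beta>}. lattice_path (P q) \<and> in_grid (a_src r s t m \<beta>) (b_src m \<beta>) (P q)
        \<and> hd (P q) = (a_src r s t m \<beta>, q) \<and> last (P q) = (1, b_src m \<beta> - u \<beta> + q))
     \<and> (\<forall>q\<in>{1..u \<beta>}. \<forall>q'\<in>{1..u \<beta>}. q \<noteq> q' \<longrightarrow> set (P q) \<inter> set (P q') = {})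
     \<and> C_src r s t m C \<beta> \<subseteq> (\<Union>q\<in>{1..u \<beta>}. set (P q))" for \<beta> and P :: "nat \<Rightarrow> (nat \<times> nat) list"
  have "\<forall>\<alpha>\<in>Vt. \<exists>P. QT \<alpha> P"
  proof
    fix \<alpha> assume \<alpha>: "\<alpha> \<in> Vt"
    interpret R: rimc "a_tgt m \<alpha>" "b_tgt r s t m \<alpha>" "u \<alpha>" "C_tgt r s t m C \<alpha>"
    proof
      show "0 < u \<alpha>" "u \<alpha> \<le> a_tgt m \<alpha>" "u \<alpha> \<le> b_tgt r s t m \<alpha>" using u_tgt \<alpha> by auto
    next
      show "C_tgt r s t m C \<alpha> \<subseteq> {1..a_tgt m \<alpha>} \<times> {1..b_tgt r s t m \<alpha>}"
      proof
        fix x assume "x \<in> C_tgt r s t m C \<alpha>"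
        then obtain i j k where x: "x = (i, coff s t m k + j)" "(i, j, k) \<in> L_set r s t m" "t k = \<alpha>"
          unfolding C_tgt_def by blast
        then have k: "k \<in> {1..r}" "1 \<le> i" "i \<le> m (t k)" "1 \<le> j" "j \<le> m (s k)"
          by (auto simp: L_set_def)
        have "coff s t m k + m (s k) \<le> b_tgt r s t m (t k)" by (rule coff_bound[OF k(1)])
        then show "x \<in> {1..a_tgt m \<alpha>} \<times> {1..b_tgt r s t m \<alpha>}"
          using x k by (auto simp: a_tgt_def)
      qed
    next
      fix xs assume "dch xs" "set xs \<subseteq> C_tgt r s t m C \<alpha>"
      moreover have "\<not> has_diag_chain (Suc (u \<alpha>)) (C_tgt r s t m C \<alpha>)"
        using uc \<alpha> unfolding u_compatible_def by simp
      ultimately show "length xs \<le> u \<alpha>" using nochain_list by blast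
    qed
    show "\<exists>P. QT \<alpha> P" unfolding QT_def by (rule R.single_main)
  qed
  then obtain H where H: "\<forall>\<alpha>\<in>Vt. QT \<alpha> (H \<alpha>)" using bchoice by metis
  have "\<forall>\<beta>\<in>Vs. \<exists>P. QS \<beta> P"
  proof
    fix \<beta> assume \<beta>: "\<beta> \<in> Vs"
    interpret R: rimc "b_src m \<beta>" "a_src r s t m \<beta>" "u \<beta>" "prod.swap ` C_src r s t m C \<beta>"
    proof
      show "0 < u \<beta>" "u \<beta> \<le> b_src m \<beta>" "u \<beta> \<le> a_src r s t m \<beta>" using u_src \<beta> by auto
    next
      show "prod.swap ` C_src r s t m C \<beta> \<subseteq> {1..b_src m \<beta>} \<times> {1..a_src r s t m \<beta>}"
      proof
        fix x assume "x \<in> prod.swap ` C_src r s t m C \<beta>"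
        then obtain i j k where x: "x = (j, roff s t m k + i)" "(i, j, k) \<in> L_set r s t m" "s k = \<beta>"
          unfolding C_src_def by auto
        then have k: "k \<in> {1..r}" "1 \<le> i" "i \<le> m (t k)" "1 \<le> j" "j \<le> m (s k)"
          by (auto simp: L_set_def)
        have "roff s t m k + m (t k) \<le> a_src r s t m (s k)" by (rule roff_bound[OF k(1)])
        then show "x \<in> {1..b_src m \<beta>} \<times> {1..a_src r s t m \<beta>}"
          using x k by (auto simp: b_src_def)
      qed
    next
      fix xs assume xs: "dch xs" "set xs \<subseteq> prod.swap ` C_src r s t m C \<beta>"
      have d: "dch (map prod.swap xs)" by (rule dch_swap[OF xs(1)])
      have sub: "set (map prod.swap xs) \<subseteq> C_src r s t m C \<beta>" using xs(2) by auto
      have "\<not> has_diag_chain (Suc (u \<beta>)) (C_src r s t m C \<beta>)"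
        using uc \<beta> unfolding u_compatible_def by simp
      from nochain_list[OF this d sub] show "length xs \<le> u \<beta>" by simp
    qed
    obtain P where P: "\<forall>p\<in>{1..u \<beta>}. lattice_path (P p) \<and> in_grid (b_src m \<beta>) (a_src r s t m \<beta>) (P p) \<and> hd (P p) = (b_src m \<beta> - u \<beta> + p, 1) \<and> last (P p) = (p, a_src r s t m \<beta>)"
      "\<forall>p\<in>{1..u \<beta>}. \<forall>p'\<in>{1..u \<beta>}. p \<noteq> p' \<longrightarrow> set (P p) \<inter> set (P p') = {}"
      "prod.swap ` C_src r s t m C \<beta> \<subseteq> (\<Union>p\<in>{1..u \<beta>}. set (P p))"
      using R.single_main by blast
    have "QS \<beta> (\<lambda>q. rev (map prod.swap (P q)))"
      unfolding QS_def
    proof (intro conjI ballI impI)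
      fix q assume q: "q \<in> {1..u \<beta>}"
      have Pq: "lattice_path (P q)" "in_grid (b_src m \<beta>) (a_src r s t m \<beta>) (P q)"
        "hd (P q) = (b_src m \<beta> - u \<beta> + q, 1)" "last (P q) = (q, a_src r s t m \<beta>)"
        using P(1) q by auto
      have ne: "P q \<noteq> []" using Pq(1) by (simp add: lattice_path_def)
      show "lattice_path (rev (map prod.swap (P q)))" by (rule lp_swap[OF Pq(1)])
      show "in_grid (a_src r s t m \<beta>) (b_src m \<beta>) (rev (map prod.swap (P q)))"
        using Pq(2) by (auto simp: in_grid_def)
      show "hd (rev (map prod.swap (P q))) = (a_src r s t m \<beta>, q)"
        using Pq(4) ne by (simp add: hd_rev last_map)
      show "last (rev (map prod.swap (P q))) = (1, b_src m \<beta> - u \<beta> + q)"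
        using Pq(3) ne by (simp add: last_rev hd_map)
    next
      fix q q' assume "q \<in> {1..u \<beta>}" "q' \<in> {1..u \<beta>}" "q \<noteq> q'"
      then have "set (P q) \<inter> set (P q') = {}" using P(2) by blast
      then show "set (rev (map prod.swap (P q))) \<inter> set (rev (map prod.swap (P q'))) = {}"
        by auto
    next
      show "C_src r s t m C \<beta> \<subseteq> (\<Union>q\<in>{1..u \<beta>}. set (rev (map prod.swap (P q))))"
      proof
        fix x assume "x \<in> C_src r s t m C \<beta>"
        then have "prod.swap x \<in> (\<Union>p\<in>{1..u \<beta>}. set (P p))" using P(3) by blast
        then obtain q where "q \<in> {1..u \<beta>}" "prod.swap x \<in> set (P q)" by blast
        then show "x \<in> (\<Union>q\<in>{1..u \<beta>}. set (rev (map prod.swap (P q))))"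
          by (auto intro!: bexI[of _ q] image_eqI[of x prod.swap "prod.swap x"])
      qed
    qed
    then show "\<exists>P. QS \<beta> P" by blast
  qed
  then obtain V where V: "\<forall>\<beta>\<in>Vs. QS \<beta> (V \<beta>)" using bchoice by metis
  show "\<exists>H V. road_map Vs Vt r s t m u H V \<and>
       (\<forall>k\<in>{1..r}. restr C k \<subseteq>
          (\<Union>p\<in>{1..u (t k)}. restr_tgt_path s t m (H (t k) p) k) \<inter>
          (\<Union>q\<in>{1..u (s k)}. restr_src_path s t m (V (s k) q) k))"
  proof (intro exI conjI)
    show "road_map Vs Vt r s t m u H V"
      unfolding road_map_def using H V unfolding QT_def QS_def by blast
  next
    show "\<forall>k\<in>{1..r}. restr C k \<subseteq>
          (\<Union>p\<in>{1..u (t k)}. restr_tgt_path s t m (H (t k) p) k) \<inter>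
          (\<Union>q\<in>{1..u (s k)}. restr_src_path s t m (V (s k) q) k)"
    proof (intro ballI subsetI IntI)
      fix k x assume k: "k \<in> {1..r}" and x: "x \<in> restr C k"
      obtain i j where ij: "x = (i, j)" by (cases x)
      have C1: "(i, j, k) \<in> C" using x ij by (simp add: restr_def)
      then have L1: "(i, j, k) \<in> L_set r s t m" using CL by blast
      then have pg: "in_page s t m k (i, j)" by (simp add: L_set_def in_page_def)
      have tk: "t k \<in> Vt" "s k \<in> Vs" using arrows k by auto
      have "(i, coff s t m k + j) \<in> C_tgt r s t m C (t k)"
        unfolding C_tgt_def using C1 L1 by blast
      then obtain p where p: "p \<in> {1..u (t k)}" "(i, coff s t m k + j) \<in> set (H (t k) p)"
        using H tk(1) unfolding QT_def by blast
      then show "x \<in> (\<Union>p\<in>{1..u (t k)}. restr_tgt_path s t m (H (t k) p) k)"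
        using pg ij by (auto simp: restr_tgt_path_def)
      have "(roff s t m k + i, j) \<in> C_src r s t m C (s k)"
        unfolding C_src_def using C1 L1 by blast
      then obtain q where q: "q \<in> {1..u (s k)}" "(roff s t m k + i, j) \<in> set (V (s k) q)"
        using V tk(2) unfolding QS_def by blast
      then show "x \<in> (\<Union>q\<in>{1..u (s k)}. restr_src_path s t m (V (s k) q) k)"
        using pg ij by (auto simp: restr_src_path_def)
    qed
  qed
next
  assume "\<exists>H V. road_map Vs Vt r s t m u H V \<and>
       (\<forall>k\<in>{1..r}. restr C k \<subseteq>
          (\<Union>p\<in>{1..u (t k)}. restr_tgt_path s t m (H (t k) p) k) \<inter>
          (\<Union>q\<in>{1..u (s k)}. restr_src_path s t m (V (s k) q) k))"
  then obtain H V where rm: "road_map Vs Vt r s t m u H V"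
    and cov: "\<forall>k\<in>{1..r}. restr C k \<subseteq>
          (\<Union>p\<in>{1..u (t k)}. restr_tgt_path s t m (H (t k) p) k) \<inter>
          (\<Union>q\<in>{1..u (s k)}. restr_src_path s t m (V (s k) q) k)" by blast
  show "u_compatible Vs Vt r s t m u C"
    unfolding u_compatible_def
  proof (intro conjI ballI notI)
    fix \<alpha> assume \<alpha>: "\<alpha> \<in> Vt" and hc: "has_diag_chain (u \<alpha> + 1) (C_tgt r s t m C \<alpha>)"
    then obtain D where D: "D \<subseteq> C_tgt r s t m C \<alpha>" "finite D" "card D = u \<alpha> + 1" "diag_chain D"
      unfolding has_diag_chain_def by blast
    have lp: "\<forall>p\<in>{1..u \<alpha>}. lattice_path (H \<alpha> p)" using rm \<alpha> unfolding road_map_def by blast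
    have "C_tgt r s t m C \<alpha> \<subseteq> (\<Union>p\<in>{1..u \<alpha>}. set (H \<alpha> p))"
    proof
      fix x assume "x \<in> C_tgt r s t m C \<alpha>"
      then obtain i j k where x: "x = (i, coff s t m k + j)" "(i, j, k) \<in> C" "(i, j, k) \<in> L_set r s t m" "t k = \<alpha>"
        unfolding C_tgt_def by blast
      then have k: "k \<in> {1..r}" by (auto simp: L_set_def)
      have "(i, j) \<in> restr C k" using x(2) by (simp add: restr_def)
      then have "(i, j) \<in> (\<Union>p\<in>{1..u (t k)}. restr_tgt_path s t m (H (t k) p) k)" using cov k by blast
      then show "x \<in> (\<Union>p\<in>{1..u \<alpha>}. set (H \<alpha> p))" using x(1,4) by (auto simp: restr_tgt_path_def)
    qed
    then have "card D \<le> u \<alpha>" using pigeon[OF D(2) _ D(4) lp] D(1) by blast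
    then show False using D(3) by simp
  next
    fix \<beta> assume \<beta>: "\<beta> \<in> Vs" and hc: "has_diag_chain (u \<beta> + 1) (C_src r s t m C \<beta>)"
    then obtain D where D: "D \<subseteq> C_src r s t m C \<beta>" "finite D" "card D = u \<beta> + 1" "diag_chain D"
      unfolding has_diag_chain_def by blast
    have lp: "\<forall>q\<in>{1..u \<beta>}. lattice_path (V \<beta> q)" using rm \<beta> unfolding road_map_def by blast
    have "C_src r s t m C \<beta> \<subseteq> (\<Union>q\<in>{1..u \<beta>}. set (V \<beta> q))"
    proof
      fix x assume "x \<in> C_src r s t m C \<beta>"
      then obtain i j k where x: "x = (roff s t m k + i, j)" "(i, j, k) \<in> C" "(i, j, k) \<in> L_set r s t m" "s k = \<beta>"
        unfolding C_src_def by blast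
      then have k: "k \<in> {1..r}" by (auto simp: L_set_def)
      have "(i, j) \<in> restr C k" using x(2) by (simp add: restr_def)
      then have "(i, j) \<in> (\<Union>q\<in>{1..u (s k)}. restr_src_path s t m (V (s k) q) k)" using cov k by blast
      then show "x \<in> (\<Union>q\<in>{1..u \<beta>}. set (V \<beta> q))" using x(1,4) by (auto simp: restr_src_path_def)
    qed
    then have "card D \<le> u \<beta>" using pigeon[OF D(2) _ D(4) lp] D(1) by blast
    then show False using D(3) by simp
  qed
qed


end
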